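(* Suppose $w$ satisfies Assumption 1 and let $h(x)=\int_0^1e^{-xQ_\xi(p)}\,d\bar w(p)$, $x\in\mathbb R$. Then: (i) $h(0)=1$ and $h(x)<\infty$ for all $x\in\mathbb R$; (ii) $h\in C^\infty(\mathbb R)$ and for every integer $k\ge0$ and $x\in\mathbb R$, $$h^{(k)}(x)=\int_0^1[-Q_\xi(p)]^ke^{-xQ_\xi(p)}\,d\bar w(p)=\int_0^1[Q_\xi(p)]^ke^{xQ_\xi(p)}\,dw(p);$$ (iii) for every even $k\ge0$, $h^{(k)}$ is strictly positive and strictly convex on $\mathbb R$, and for every odd $k\ge1$, $h^{(k)}$ is strictly increasing on $\mathbb R$.
   Context: Assumption 1 on $w:[0,1]\to[0,1]$: $w$ is strictly increasing, continuously differentiable, $w(0)=0$, $w(1)=1$, and there exist $c>0$, $\alpha\in(-1,0)$ with $w'(p)\le c[p^\alpha+(1-p)^\alpha]$ for all $p\in(0,1)$. $\bar w(p)=1-w(1-p)$. $Q_\xi=\Phi^{-1}$ is the quantile function of a standard normal random variable $\xi$, $\Phi$ the standard normal distribution function; integrals $d\bar w$, $dw$ are Lebesgue–Stieltjes integrals. *)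

theory Defs
  imports "HOL-Probability.Probability"
begin

definition std_normal_cdf :: "real \<Rightarrow> real" where
  "std_normal_cdf x = (LBINT t:{..x}. std_normal_density t)"

definition std_normal_quantile :: "real \<Rightarrow> real" where
  "std_normal_quantile p = Inf {x. p \<le> std_normal_cdf x}"

definition dual_w :: "(real \<Rightarrow> real) \<Rightarrow> real \<Rightarrow> real" where
  "dual_w w p = 1 - w (1 - p)"

text \<open>Lebesgue--Stieltjes measure on [0,1] induced by a nondecreasing function G on [0,1]
  (G is extended constantly outside [0,1], so the measure lives on [0,1]).\<close>

definition LS_measure :: "(real \<Rightarrow> real) \<Rightarrow> real measure" where
  "LS_measure G = interval_measure (\<lambda>x. G (max 0 (min 1 x)))"

definition strictly_convex :: "(real \<Rightarrow> real) \<Rightarrow> bool" where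
  "strictly_convex f \<longleftrightarrow>
     (\<forall>x y t. x \<noteq> y \<longrightarrow> 0 < t \<longrightarrow> t < 1 \<longrightarrow>
        f ((1 - t) * x + t * y) < (1 - t) * f x + t * f y)"

definition assumption1 :: "(real \<Rightarrow> real) \<Rightarrow> bool" where
  "assumption1 w \<longleftrightarrow>
     w ` {0..1} \<subseteq> {0..1} \<and>
     strict_mono_on {0..1} w \<and>
     continuous_on {0..1} w \<and>
     w C1_differentiable_on {0<..<1} \<and>
     w 0 = 0 \<and> w 1 = 1 \<and>
     (\<exists>c \<alpha>. c > 0 \<and> -1 < \<alpha> \<and> \<alpha> < 0 \<and>
        (\<forall>p\<in>{0<..<1}. deriv w p \<le> c * (p powr \<alpha> + (1 - p) powr \<alpha>)))"

end

theory Submission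
  imports Defs "HOL-Real_Asymp.Real_Asymp"
begin


lemma exp_taylor1_bound: fixes u :: real shows "\<bar>exp u - 1 - u\<bar> \<le> u\<^sup>2 * exp \<bar>u\<bar>"
proof -
  have a: "1 + u \<le> exp u" by (rule exp_ge_add_one_self)
  have b: "1 - u \<le> exp (- u)" using exp_ge_add_one_self[of "-u"] by simp
  have b': "exp u - 1 \<le> u * exp u"
  proof -
    have "exp u * (1 - u) \<le> exp u * exp (-u)" using b by (intro mult_left_mono) auto
    then show ?thesis by (simp add: exp_minus field_simps)
  qed
  have c: "exp u - 1 - u \<le> u * (exp u - 1)"
    using b' by (simp add: algebra_simps)
  have ab: "\<bar>exp u - 1 - u\<bar> = exp u - 1 - u" by (rule abs_of_nonneg) (use a in linarith)
  have "exp u - 1 - u \<le> u\<^sup>2 * exp \<bar>u\<bar>"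
  proof (cases "u \<ge> 0")
    case True
    have "u * (exp u - 1) \<le> u * (u * exp u)" using b' True by (intro mult_left_mono) auto
    then show ?thesis using c True by (simp add: power2_eq_square mult.assoc)
  next
    case False
    have "1 - exp u \<le> - u" using a by linarith
    then have "u * (exp u - 1) = (- u) * (1 - exp u)" by (simp add: algebra_simps)
    also have "\<dots> \<le> (- u) * (- u)" using \<open>1 - exp u \<le> - u\<close> False by (intro mult_left_mono) auto
    also have "\<dots> = u\<^sup>2 * 1" by (simp add: power2_eq_square)
    also have "\<dots> \<le> u\<^sup>2 * exp \<bar>u\<bar>" by (intro mult_left_mono) auto
    finally show ?thesis using c by linarith
  qed
  then show ?thesis using ab by simp
qed

lemma pow_le_exp: fixes u :: real assumes "0 \<le> u" shows "u ^ k \<le> real k ^ k * exp u"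
proof (cases "k = 0")
  case True then show ?thesis using assms by simp
next
  case False
  then have k: "real k > 0" by simp
  have "u / k \<le> exp (u / k)" using exp_ge_add_one_self[of "u/k"] by linarith
  then have "(u / k) ^ k \<le> exp (u / k) ^ k" using assms k by (intro power_mono) auto
  also have "\<dots> = exp u" using k by (simp add: exp_of_nat_mult[symmetric])
  finally have "u ^ k / real k ^ k \<le> exp u" by (simp add: power_divide)
  then show ?thesis using k by (simp add: divide_le_eq mult.commute)
qed

lemma integrable_pow_exp:
  fixes M :: "real measure" and g :: "real \<Rightarrow> real"
  assumes g[measurable]: "g \<in> borel_measurable M"
    and I: "\<And>a. integrable M (\<lambda>x. exp (a * \<bar>g x\<bar>))"
  shows "integrable M (\<lambda>x. \<bar>g x\<bar> ^ k * exp (a * \<bar>g x\<bar>))"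
proof (rule Bochner_Integration.integrable_bound[OF integrable_mult_right[OF I[of "\<bar>a\<bar> + 1"], of "real k ^ k"]])
  show "(\<lambda>x. \<bar>g x\<bar> ^ k * exp (a * \<bar>g x\<bar>)) \<in> borel_measurable M" by measurable
  show "AE x in M. norm (\<bar>g x\<bar> ^ k * exp (a * \<bar>g x\<bar>)) \<le> norm (real k ^ k * exp ((\<bar>a\<bar> + 1) * \<bar>g x\<bar>))"
  proof (rule AE_I2)
    fix x
    have "\<bar>g x\<bar> ^ k * exp (a * \<bar>g x\<bar>) \<le> (real k ^ k * exp \<bar>g x\<bar>) * exp (\<bar>a\<bar> * \<bar>g x\<bar>)"
      using pow_le_exp[of "\<bar>g x\<bar>" k]
      by (intro mult_mono) (auto intro: mult_right_mono simp: abs_ge_self)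
    also have "\<dots> = real k ^ k * exp ((\<bar>a\<bar> + 1) * \<bar>g x\<bar>)"
      by (simp add: algebra_simps exp_add[symmetric])
    finally show "norm (\<bar>g x\<bar> ^ k * exp (a * \<bar>g x\<bar>)) \<le> norm (real k ^ k * exp ((\<bar>a\<bar> + 1) * \<bar>g x\<bar>))"
      by simp
  qed
qed

lemma integrable_moment:
  fixes M :: "real measure" and g :: "real \<Rightarrow> real"
  assumes g[measurable]: "g \<in> borel_measurable M"
    and I: "\<And>a. integrable M (\<lambda>x. exp (a * \<bar>g x\<bar>))"
  shows "integrable M (\<lambda>x. g x ^ k * exp (y * g x))"
proof (rule Bochner_Integration.integrable_bound[OF integrable_pow_exp[OF g I, of k "\<bar>y\<bar>"]])
  show "(\<lambda>x. g x ^ k * exp (y * g x)) \<in> borel_measurable M" by measurable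
  show "AE x in M. norm (g x ^ k * exp (y * g x)) \<le> norm (\<bar>g x\<bar> ^ k * exp (\<bar>y\<bar> * \<bar>g x\<bar>))"
  proof (rule AE_I2)
    fix x
    have "y * g x \<le> \<bar>y\<bar> * \<bar>g x\<bar>" by (metis abs_ge_self abs_mult)
    then show "norm (g x ^ k * exp (y * g x)) \<le> norm (\<bar>g x\<bar> ^ k * exp (\<bar>y\<bar> * \<bar>g x\<bar>))"
      by (auto simp: abs_mult power_abs intro!: mult_left_mono)
  qed
qed

lemma moment_deriv:
  fixes M :: "real measure" and g :: "real \<Rightarrow> real"
  assumes g[measurable]: "g \<in> borel_measurable M"
    and I: "\<And>a. integrable M (\<lambda>x. exp (a * \<bar>g x\<bar>))"
  shows "((\<lambda>y. \<integral>x. g x ^ k * exp (y * g x) \<partial>M) has_real_derivative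
            (\<integral>x. g x ^ Suc k * exp (t * g x) \<partial>M)) (at t)"
proof -
  define H where "H k y = (\<integral>x. g x ^ k * exp (y * g x) \<partial>M)" for k y
  define E where "E = (\<integral>x. \<bar>g x\<bar> ^ (k + 2) * exp ((\<bar>t\<bar> + 1) * \<bar>g x\<bar>) \<partial>M)"
  note intm = integrable_moment[OF g I]
  have bound: "\<bar>(H k (t + h) - H k t) / h - H (Suc k) t\<bar> \<le> \<bar>h\<bar> * E"
    if h: "h \<noteq> 0" "\<bar>h\<bar> \<le> 1" for h
  proof -
    have "\<bar>(H k (t + h) - H k t) / h - H (Suc k) t\<bar> =
        \<bar>\<integral>x. (g x ^ k * exp ((t + h) * g x) - g x ^ k * exp (t * g x)) / h - g x ^ Suc k * exp (t * g x) \<partial>M\<bar>"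
    proof -
      have "H k (t + h) - H k t = (\<integral>x. g x ^ k * exp ((t + h) * g x) - g x ^ k * exp (t * g x) \<partial>M)"
        unfolding H_def by (rule Bochner_Integration.integral_diff[symmetric]) (rule intm)+
      then have e1: "(H k (t + h) - H k t) / h = (\<integral>x. (g x ^ k * exp ((t + h) * g x) - g x ^ k * exp (t * g x)) / h \<partial>M)"
        by simp
      have i1: "integrable M (\<lambda>x. (g x ^ k * exp ((t + h) * g x) - g x ^ k * exp (t * g x)) / h)"
        by (rule integrable_divide, rule Bochner_Integration.integrable_diff; rule intm)
      show ?thesis by (subst Bochner_Integration.integral_diff[OF i1 intm[of "Suc k" t]], subst e1, simp only: H_def)
    qed
    also have "\<dots> \<le> (\<integral>x. \<bar>h\<bar> * (\<bar>g x\<bar> ^ (k + 2) * exp ((\<bar>t\<bar> + 1) * \<bar>g x\<bar>)) \<partial>M)"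
    proof (rule integral_abs_bound_integral)
      show "integrable M (\<lambda>x. (g x ^ k * exp ((t + h) * g x) - g x ^ k * exp (t * g x)) / h - g x ^ Suc k * exp (t * g x))"
        by (rule Bochner_Integration.integrable_diff[OF integrable_divide[OF Bochner_Integration.integrable_diff[OF intm intm]] intm])
      show "integrable M (\<lambda>x. \<bar>h\<bar> * (\<bar>g x\<bar> ^ (k + 2) * exp ((\<bar>t\<bar> + 1) * \<bar>g x\<bar>)))"
        by (rule integrable_mult_right) (rule integrable_pow_exp[OF g I])
    next
      fix x
      define u where "u = h * g x"
      have eq: "(g x ^ k * exp ((t + h) * g x) - g x ^ k * exp (t * g x)) / h - g x ^ Suc k * exp (t * g x)
          = g x ^ k * exp (t * g x) * (exp u - 1 - u) / h"
      proof -
        have ex: "exp ((t + h) * g x) = exp (t * g x) * exp u"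
          by (simp add: u_def exp_add[symmetric] distrib_right)
        have ug: "u / h = g x" using h by (simp add: u_def)
        have "g x ^ k * exp (t * g x) * (exp u - 1 - u) / h
            = g x ^ k * exp (t * g x) * (exp u - 1) / h - g x ^ k * exp (t * g x) * (u / h)"
          by (simp add: right_diff_distrib diff_divide_distrib)
        also have "\<dots> = (g x ^ k * exp ((t + h) * g x) - g x ^ k * exp (t * g x)) / h - g x ^ Suc k * exp (t * g x)"
          unfolding ug ex by (simp add: algebra_simps)
        finally show ?thesis by simp
      qed
      have "\<bar>g x ^ k * exp (t * g x) * (exp u - 1 - u) / h\<bar>
          = \<bar>g x\<bar> ^ k * exp (t * g x) * \<bar>exp u - 1 - u\<bar> / \<bar>h\<bar>"
        by (simp add: abs_mult power_abs)
      also have "\<dots> \<le> \<bar>g x\<bar> ^ k * exp (t * g x) * (u\<^sup>2 * exp \<bar>u\<bar>) / \<bar>h\<bar>"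
        using exp_taylor1_bound[of u] by (intro divide_right_mono mult_left_mono) auto
      also have "\<dots> = \<bar>h\<bar> * (\<bar>g x\<bar> ^ (k + 2) * (exp (t * g x) * exp (\<bar>h\<bar> * \<bar>g x\<bar>)))"
      proof -
        have hh: "h * h / \<bar>h\<bar> = \<bar>h\<bar>" using h by (simp add: divide_simps)
        have "u\<^sup>2 * exp \<bar>u\<bar> / \<bar>h\<bar> = (h * h / \<bar>h\<bar>) * (g x * g x) * exp (\<bar>h\<bar> * \<bar>g x\<bar>)"
          by (simp add: u_def power2_eq_square abs_mult)
        also have "\<dots> = \<bar>h\<bar> * \<bar>g x\<bar> ^ 2 * exp (\<bar>h\<bar> * \<bar>g x\<bar>)"
          unfolding hh by (simp add: power2_eq_square abs_mult_self_eq)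
        finally have BB: "u\<^sup>2 * exp \<bar>u\<bar> / \<bar>h\<bar> = \<bar>h\<bar> * \<bar>g x\<bar> ^ 2 * exp (\<bar>h\<bar> * \<bar>g x\<bar>)" .
        have "\<bar>g x\<bar> ^ k * exp (t * g x) * (u\<^sup>2 * exp \<bar>u\<bar>) / \<bar>h\<bar>
           = \<bar>g x\<bar> ^ k * exp (t * g x) * (u\<^sup>2 * exp \<bar>u\<bar> / \<bar>h\<bar>)"
          by (rule times_divide_eq_right[symmetric])
        also have "\<dots> = \<bar>g x\<bar> ^ k * exp (t * g x) * (\<bar>h\<bar> * \<bar>g x\<bar> ^ 2 * exp (\<bar>h\<bar> * \<bar>g x\<bar>))"
          unfolding BB ..
        also have "\<dots> = \<bar>h\<bar> * (\<bar>g x\<bar> ^ (k + 2) * (exp (t * g x) * exp (\<bar>h\<bar> * \<bar>g x\<bar>)))"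
          by (simp add: power_add algebra_simps power2_eq_square)
        finally show ?thesis .
      qed
      also have "\<dots> \<le> \<bar>h\<bar> * (\<bar>g x\<bar> ^ (k + 2) * exp ((\<bar>t\<bar> + 1) * \<bar>g x\<bar>))"
      proof -
        have "t * g x \<le> \<bar>t\<bar> * \<bar>g x\<bar>" by (metis abs_ge_self abs_mult)
        moreover have "\<bar>h\<bar> * \<bar>g x\<bar> \<le> 1 * \<bar>g x\<bar>" using h by (intro mult_right_mono) auto
        ultimately have "exp (t * g x) * exp (\<bar>h\<bar> * \<bar>g x\<bar>) \<le> exp ((\<bar>t\<bar> + 1) * \<bar>g x\<bar>)"
          by (simp add: exp_add[symmetric] distrib_right)
        then show ?thesis by (intro mult_left_mono) auto
      qed
      finally show "\<bar>(g x ^ k * exp ((t + h) * g x) - g x ^ k * exp (t * g x)) / h - g x ^ Suc k * exp (t * g x)\<bar>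
          \<le> \<bar>h\<bar> * (\<bar>g x\<bar> ^ (k + 2) * exp ((\<bar>t\<bar> + 1) * \<bar>g x\<bar>))"
        using eq by simp
    qed
    also have "\<dots> = \<bar>h\<bar> * E" by (simp add: E_def)
    finally show ?thesis .
  qed
  have "((\<lambda>h. (H k (t + h) - H k t) / h - H (Suc k) t) \<longlongrightarrow> 0) (at 0)"
  proof (rule Lim_null_comparison)
    show "eventually (\<lambda>h. norm ((H k (t + h) - H k t) / h - H (Suc k) t) \<le> \<bar>h\<bar> * E) (at 0)"
      unfolding eventually_at
      by (intro exI[of _ 1]) (auto intro!: bound)
    show "((\<lambda>h. \<bar>h\<bar> * E) \<longlongrightarrow> 0) (at (0::real))"
      by (rule tendsto_eq_intros refl | simp)+
  qed
  then have "((\<lambda>h. (H k (t + h) - H k t) / h) \<longlongrightarrow> H (Suc k) t) (at 0)"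
    by (rule LIM_zero_cancel)
  then show ?thesis unfolding DERIV_def H_def .
qed


abbreviation "NM \<equiv> density lborel (\<lambda>x. ennreal (std_normal_density x))"

lemma NM_real_dist: "real_distribution NM"
proof -
  interpret prob_space NM using prob_space_normal_density by simp
  show ?thesis by unfold_locales simp_all
qed

lemma NM_measure: assumes A: "A \<in> sets borel"
  shows "measure NM A = (LBINT t:A. std_normal_density t)"
proof -
  have "measure NM A = enn2real (emeasure NM A)"
    by (simp add: measure_def)
  also have "emeasure NM A = (\<integral>\<^sup>+ t. ennreal (std_normal_density t) * indicator A t \<partial>lborel)"
    using A by (simp add: emeasure_density)
  also have "\<dots> = (\<integral>\<^sup>+ t. ennreal (indicator A t * std_normal_density t) \<partial>lborel)"
    by (intro nn_integral_cong) (auto split: split_indicator)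
  also have "\<dots> = ennreal (\<integral> t. indicator A t * std_normal_density t \<partial>lborel)"
  proof (intro nn_integral_eq_integral)
    show "integrable lborel (\<lambda>t. indicator A t * std_normal_density t)"
      using integrable_real_mult_indicator[of A lborel std_normal_density] A by (simp add: mult.commute)
  qed auto
  finally show ?thesis
    by (simp add: set_lebesgue_integral_def)
qed

lemma Phi_cdf: "std_normal_cdf = cdf NM"
  by (auto simp: std_normal_cdf_def cdf_def NM_measure)

lemma std_normal_density_deriv:
  "(std_normal_density has_real_derivative (- x * std_normal_density x)) (at x)"
  unfolding std_normal_density_def[abs_def]
  by (rule derivative_eq_intros refl | simp)+

lemma std_normal_density_even: "std_normal_density (-x) = std_normal_density x"
  by (simp add: std_normal_density_def)

lemma std_normal_density_pos: "std_normal_density x > 0"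
  by (simp add: std_normal_density_def)

lemma Phi_mono: "x \<le> y \<Longrightarrow> std_normal_cdf x \<le> std_normal_cdf y"
  unfolding Phi_cdf using NM_real_dist real_distribution.finite_borel_measure_M
  by (metis finite_borel_measure.cdf_nondecreasing)

lemma Phi_top: "(std_normal_cdf \<longlongrightarrow> 1) at_top"
  unfolding Phi_cdf using NM_real_dist real_distribution.cdf_lim_at_top_prob by blast

lemma Phi_bot: "(std_normal_cdf \<longlongrightarrow> 0) at_bot"
  unfolding Phi_cdf using NM_real_dist real_distribution.finite_borel_measure_M
  by (metis finite_borel_measure.cdf_lim_at_bot)

lemma Phi_nonneg: "std_normal_cdf x \<ge> 0"
  unfolding Phi_cdf by (simp add: cdf_def)

lemma Phi_deriv: "(std_normal_cdf has_real_derivative std_normal_density x) (at x)"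
proof -
  let ?F = "\<lambda>u. std_normal_cdf (x - 1) + (LBINT y=(x-1)..u. std_normal_density y)"
  have cont: "continuous_on {x-1..x+1} std_normal_density"
    using std_normal_density_deriv
    by (meson DERIV_continuous continuous_at_imp_continuous_on)
  have "((\<lambda>u. LBINT y=(x-1)..u. std_normal_density y) has_vector_derivative std_normal_density x)
          (at x within {x-1..x+1})"
    by (rule interval_integral_FTC2[OF _ _ cont]) auto
  then have "((\<lambda>u. LBINT y=(x-1)..u. std_normal_density y) has_real_derivative std_normal_density x) (at x)"
    using at_within_Icc_at[of "x-1" x "x+1"]
    by (simp add: has_real_derivative_iff_has_vector_derivative)
  then have d: "(?F has_real_derivative std_normal_density x) (at x)"
    by (auto intro!: derivative_eq_intros)
  show ?thesis
  proof (rule has_field_derivative_transform_within_open[OF d, of "{x-1<..}"])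
    fix u assume u: "u \<in> {x-1<..}"
    interpret finite_borel_measure NM
      using NM_real_dist real_distribution.finite_borel_measure_M by blast
    have "std_normal_cdf u - std_normal_cdf (x-1) = measure NM {x-1<..u}"
      unfolding Phi_cdf using u by (intro cdf_diff_eq) auto
    also have "\<dots> = (LBINT y=(x-1)..u. std_normal_density y)"
      using u by (simp add: NM_measure interval_integral_Ioc)
    finally show "?F u = std_normal_cdf u" by simp
  qed auto
qed

lemma Phi_cont: "isCont std_normal_cdf x"
  using Phi_deriv DERIV_isCont by blast

lemma Phi_strict: "x < y \<Longrightarrow> std_normal_cdf x < std_normal_cdf y"
  by (rule DERIV_pos_imp_increasing) (use Phi_deriv std_normal_density_pos in auto)

lemma Phi_sym: "std_normal_cdf (-x) = 1 - std_normal_cdf x"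
proof -
  let ?S = "\<lambda>x. std_normal_cdf (-x) + std_normal_cdf x"
  have d: "\<forall>x. (?S has_real_derivative 0) (at x)"
  proof
    fix x
    have "(?S has_real_derivative (std_normal_density (-x) * (-1) + std_normal_density x)) (at x)"
      by (rule derivative_eq_intros DERIV_chain2[OF Phi_deriv] Phi_deriv refl | simp)+
    then show "(?S has_real_derivative 0) (at x)" by (simp add: std_normal_density_even)
  qed
  have c: "?S y = ?S 0" for y using DERIV_isconst_all[OF d] by blast
  have "(?S \<longlongrightarrow> 0 + 1) at_top"
    by (intro tendsto_add Phi_top filterlim_compose[OF Phi_bot] filterlim_uminus_at_bot_at_top)
  moreover have "?S = (\<lambda>_. ?S 0)" using c by (intro ext) blast
  ultimately have "((\<lambda>_::real. ?S 0) \<longlongrightarrow> 1) at_top" by simp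
  then have "?S 0 = 1" by (simp add: tendsto_const_iff)
  then show ?thesis using c[of x] by simp
qed

lemma Phi_pos: "std_normal_cdf x > 0"
  using Phi_strict[of "x-1" x] Phi_nonneg[of "x-1"] by simp

lemma Phi_less1: "std_normal_cdf x < 1"
  using Phi_sym[of "-x"] Phi_pos[of "-x"] by simp

lemma Phi_zero: "std_normal_cdf 0 = 1/2"
  using Phi_sym[of 0] by simp


lemma Phi_strict_mono: "strict_mono std_normal_cdf"
  by (auto simp: strict_mono_def Phi_strict)

lemma Phi_le_iff: "std_normal_cdf x \<le> std_normal_cdf y \<longleftrightarrow> x \<le> y"
  using Phi_strict_mono strict_mono_less_eq by blast

lemma Phi_tail: assumes t: "1 \<le> t" shows "std_normal_cdf (-t) \<le> exp (- t\<^sup>2 / 2)"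
proof -
  let ?D = "\<lambda>s. exp (- s\<^sup>2 / 2) - std_normal_cdf (-s)"
  have d: "(?D has_real_derivative (exp (- s\<^sup>2 / 2) * (- s) + std_normal_density (-s))) (at s)" for s
    by (rule derivative_eq_intros DERIV_chain2[OF Phi_deriv] refl | simp)+
  have le: "?D s \<le> ?D t" if "t \<le> s" for s
  proof (rule DERIV_nonpos_imp_decreasing_open[OF that])
    fix x assume x: "t < x" "x < s"
    have "std_normal_density (-x) \<le> exp (- x\<^sup>2 / 2) * 1"
    proof -
      have s1: "1 \<le> sqrt (2 * pi)" using pi_gt3 by (simp add: real_le_rsqrt)
      have "exp (- x\<^sup>2 / 2) / sqrt (2 * pi) \<le> exp (- x\<^sup>2 / 2) / 1"
        using s1 by (intro divide_left_mono) auto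
      then show ?thesis by (simp add: std_normal_density_def)
    qed
    also have "\<dots> \<le> exp (- x\<^sup>2 / 2) * x" using x t by (intro mult_left_mono) auto
    finally show "\<exists>y. (?D has_real_derivative y) (at x) \<and> y \<le> 0"
      using d[of x] by (intro exI[of _ "exp (- x\<^sup>2 / 2) * (- x) + std_normal_density (-x)"]) auto
  next
    show "continuous_on {t..s} ?D"
      using d by (meson DERIV_continuous continuous_at_imp_continuous_on)
  qed
  have "(?D \<longlongrightarrow> 0 - 0) at_top"
  proof (intro tendsto_diff filterlim_compose[OF Phi_bot] filterlim_uminus_at_bot_at_top)
    show "((\<lambda>s::real. exp (- s\<^sup>2 / 2)) \<longlongrightarrow> 0) at_top" by real_asymp
  qed
  then have "0 \<le> ?D t"
    using le by (intro tendsto_le[OF _ tendsto_const, of at_top ?D]) (auto intro!: eventually_at_top_linorderI[of t])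
  then show ?thesis by simp
qed

abbreviation "QQ \<equiv> std_normal_quantile"

lemma Q_Phi: "QQ (std_normal_cdf t) = t"
proof -
  have "{x. std_normal_cdf t \<le> std_normal_cdf x} = {t..}" by (auto simp: Phi_le_iff)
  then show ?thesis by (simp add: std_normal_quantile_def)
qed

lemma Phi_surj: assumes p: "0 < p" "p < 1" shows "\<exists>t. std_normal_cdf t = p"
proof -
  have "eventually (\<lambda>x. std_normal_cdf x < p) at_bot"
    using Phi_bot p by (simp add: order_tendsto_iff)
  then obtain a where a: "std_normal_cdf a < p" by (auto simp: eventually_at_bot_linorder)
  have "eventually (\<lambda>x. std_normal_cdf x > p) at_top"
    using Phi_top p by (simp add: order_tendsto_iff)
  then obtain b where b: "std_normal_cdf b > p" by (auto simp: eventually_at_top_linorder)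
  have ab: "a \<le> b" using a b Phi_le_iff[of b a] by linarith
  have "continuous_on {a..b} std_normal_cdf"
    using Phi_cont by (simp add: continuous_at_imp_continuous_on)
  from IVT'[of std_normal_cdf a p b, OF _ _ ab this] a b show ?thesis by auto
qed

lemma Phi_Q: "0 < p \<Longrightarrow> p < 1 \<Longrightarrow> std_normal_cdf (QQ p) = p"
  using Phi_surj Q_Phi by metis

lemma Q_reflect: assumes "0 < p" "p < 1" shows "QQ (1 - p) = - QQ p"
proof -
  have "1 - p = std_normal_cdf (- QQ p)" using Phi_sym Phi_Q[OF assms] by simp
  then show ?thesis by (simp add: Q_Phi)
qed

lemma Q_ge_iff: "0 < p \<Longrightarrow> p < 1 \<Longrightarrow> t \<le> QQ p \<longleftrightarrow> std_normal_cdf t \<le> p"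
  using Phi_Q Phi_le_iff by metis

lemma Q_le_iff: "0 < p \<Longrightarrow> p < 1 \<Longrightarrow> QQ p \<le> t \<longleftrightarrow> p \<le> std_normal_cdf t"
  using Phi_Q Phi_le_iff by metis

lemma Q_mono: "mono_on {0<..<1} QQ"
  by (rule mono_onI) (metis Phi_Q Phi_le_iff greaterThanLessThan_iff)

lemma Q_zero: "0 < p \<Longrightarrow> p < 1 \<Longrightarrow> QQ p = 0 \<Longrightarrow> p = 1/2"
  using Phi_Q Phi_zero by metis


lemma le_powr_small: fixes x b :: real shows "0 \<le> x \<Longrightarrow> x \<le> 1 \<Longrightarrow> 0 < b \<Longrightarrow> b \<le> 1 \<Longrightarrow> x \<le> x powr b"
  using powr_mono'[of b 1 x] by (cases "x = 0") auto

lemma weight_bound: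
  assumes A1: "assumption1 w"
  shows "\<exists>C b. C > 0 \<and> 0 < b \<and> b \<le> 1 \<and>
     (\<forall>s\<in>{0..1}. w s \<le> C * s powr b \<and> 1 - w (1 - s) \<le> C * s powr b)"
proof -
  from A1 obtain c \<alpha> where c: "c > 0" and al: "-1 < \<alpha>" "\<alpha> < 0"
    and db: "\<And>p. p\<in>{0<..<1} \<Longrightarrow> deriv w p \<le> c * (p powr \<alpha> + (1 - p) powr \<alpha>)"
    unfolding assumption1_def by blast
  from A1 obtain D where D: "\<And>x. x \<in> {0<..<1} \<Longrightarrow> (w has_vector_derivative D x) (at x)"
    unfolding assumption1_def C1_differentiable_on_def by blast
  have wd: "(w has_real_derivative deriv w x) (at x)" if "x \<in> {0<..<1}" for x
    using D[OF that] DERIV_imp_deriv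
    by (metis has_real_derivative_iff_has_vector_derivative)
  have wc: "continuous_on {0..1} w" using A1 unfolding assumption1_def by blast
  have w0: "w 0 = 0" and w1: "w 1 = 1" using A1 unfolding assumption1_def by auto
  define b where "b = 1 + \<alpha>"
  have b: "0 < b" "b \<le> 1" "b - 1 = \<alpha>" using al by (auto simp: b_def)
  define g where "g s = c / b * (s powr b - (1 - s) powr b)" for s
  have gd: "(g has_real_derivative c * (s powr \<alpha> + (1 - s) powr \<alpha>)) (at s)" if "s \<in> {0<..<1}" for s
  proof -
    have "(g has_real_derivative c / b * (b * s powr (b - 1) - b * (1 - s) powr (b - 1) * (- 1))) (at s)"
      unfolding g_def[abs_def] using that
      by (intro derivative_eq_intros has_real_derivative_powr refl DERIV_chain2[OF has_real_derivative_powr]) auto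
    moreover have "c / b * (b * s powr (b - 1) - b * (1 - s) powr (b - 1) * (- 1)) = c * (s powr \<alpha> + (1 - s) powr \<alpha>)"
      using b by (simp add: field_simps)
    ultimately show ?thesis by simp
  qed
  have gc: "continuous_on {0..1} g"
    unfolding g_def[abs_def] using b
    by (intro continuous_intros continuous_on_powr') auto
  have key: "w y - w x \<le> g y - g x" if "0 \<le> x" "x \<le> y" "y \<le> 1" for x y
  proof -
    have "(g x - w x) \<le> (g y - w y)"
    proof (rule DERIV_nonneg_imp_increasing_open[OF that(2)])
      fix z assume z: "x < z" "z < y"
      then have zz: "z \<in> {0<..<1}" using that by auto
      show "\<exists>d. ((\<lambda>u. g u - w u) has_real_derivative d) (at z) \<and> d \<ge> 0"
        using DERIV_diff[OF gd[OF zz] wd[OF zz]] db[OF zz] by auto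
    next
      show "continuous_on {x..y} (\<lambda>u. g u - w u)"
        using gc wc that by (intro continuous_intros) (auto elim: continuous_on_subset)
    qed
    then show ?thesis by simp
  qed
  define C where "C = 2 * c / b"
  have est: "1 - (1 - s) powr b \<le> s powr b" if "0 \<le> s" "s \<le> 1" for s
    using le_powr_small[of "1 - s" b] le_powr_small[of s b] that b by auto
  show ?thesis
  proof (intro exI conjI ballI)
    show "C > 0" using c b by (simp add: C_def mult.assoc mult.left_commute)
    show "0 < b" "b \<le> 1" using b by auto
    fix s :: real assume s: "s \<in> {0..1}"
    have "w s \<le> g s - g 0" using key[of 0 s] s w0 by auto
    also have "\<dots> = c / b * (s powr b + (1 - (1 - s) powr b))"
      using b by (simp add: g_def algebra_simps)
    also have "\<dots> \<le> c / b * (s powr b + s powr b)"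
      using est[of s] s c b by (intro mult_left_mono add_left_mono) auto
    finally show "w s \<le> C * s powr b" by (simp add: C_def mult.assoc mult.left_commute)
    have "1 - w (1 - s) \<le> g 1 - g (1 - s)" using key[of "1 - s" 1] s w1 by auto
    also have "\<dots> = c / b * (s powr b + (1 - (1 - s) powr b))"
      using b by (simp add: g_def algebra_simps)
    also have "\<dots> \<le> c / b * (s powr b + s powr b)"
      using est[of s] s c b by (intro mult_left_mono add_left_mono) auto
    finally show "1 - w (1 - s) \<le> C * s powr b" by (simp add: C_def mult.assoc mult.left_commute)
  qed
qed


lemma exp_abs_integrable:
  fixes M :: "real measure" and g :: "real \<Rightarrow> real"
  assumes fin: "finite_measure M" and g[measurable]: "g \<in> borel_measurable M" and b: "0 < b"
    and tail: "\<And>n::nat. measure M {x\<in>space M. real n \<le> \<bar>g x\<bar>} \<le> K * exp (- b * (real n)\<^sup>2)"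
  shows "integrable M (\<lambda>x. exp (a * \<bar>g x\<bar>))"
proof -
  interpret finite_measure M by (rule fin)
  define a' where "a' = \<bar>a\<bar>"
  have a': "0 \<le> a'" by (simp add: a'_def)
  have t0: "measure M {x\<in>space M. real 0 \<le> \<bar>g x\<bar>} \<le> K" using tail[of 0] by simp
  have K: "0 \<le> K" using order_trans[OF measure_nonneg t0] .
  define c where "c n = exp (a' * (real n + 1))" for n :: nat
  define T where "T n = {x\<in>space M. real n \<le> \<bar>g x\<bar>}" for n :: nat
  have T[measurable]: "T n \<in> sets M" for n unfolding T_def by measurable
  define d where "d n = c n * (K * exp (- b * (real n)\<^sup>2))" for n :: nat
  have d_nonneg: "0 \<le> d n" for n using K by (simp add: d_def c_def)
  have sd: "summable d"
  proof (rule summable_comparison_test')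
    show "summable (\<lambda>n. K * exp a' * exp (-1) ^ n)"
      by (intro summable_mult summable_geometric) auto
    define N where "N = nat \<lceil>(2 * a' + 1) / b\<rceil> + 1"
    fix n :: nat assume n: "N \<le> n"
    have n1: "1 \<le> real n" using n by (simp add: N_def)
    have "(2 * a' + 1) / b \<le> real n" using n b unfolding N_def by linarith
    then have "2 * a' + 1 \<le> b * real n" using b by (simp add: divide_le_eq mult.commute)
    then have "(2 * a' + 1) * real n \<le> b * real n * real n" using n1 by (intro mult_right_mono) auto
    moreover have "0 \<le> a' * real n" using a' by simp
    ultimately have ineq: "a' * (real n + 1) - b * (real n)\<^sup>2 \<le> a' - real n"
      by (simp add: power2_eq_square algebra_simps)
    have e1: "exp (a' * (real n + 1) - b * (real n)\<^sup>2) = exp (a' * (real n + 1)) * exp (- b * (real n)\<^sup>2)"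
      by (simp add: exp_add[symmetric])
    have "norm (d n) = K * exp (a' * (real n + 1) - b * (real n)\<^sup>2)"
      using d_nonneg[of n] unfolding e1 by (simp add: d_def c_def)
    also have "\<dots> \<le> K * exp (a' - real n)"
      using ineq K by (intro mult_left_mono) auto
    also have "\<dots> = K * exp a' * exp (-1) ^ n"
      by (simp add: exp_of_nat_mult[symmetric] exp_add[symmetric])
    finally show "norm (d n) \<le> K * exp a' * exp (-1) ^ n" .
  qed
  have pt: "ennreal (exp (a' * \<bar>g x\<bar>)) \<le> (\<Sum>n. ennreal (c n) * indicator (T n) x)"
    if x: "x \<in> space M" for x
  proof -
    define m where "m = nat \<lfloor>\<bar>g x\<bar>\<rfloor>"
    have m1: "real m \<le> \<bar>g x\<bar>" "\<bar>g x\<bar> < real m + 1" unfolding m_def by linarith+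
    have "exp (a' * \<bar>g x\<bar>) \<le> c m" unfolding c_def using m1 a' by (intro exp_mono mult_left_mono) auto
    then have "ennreal (exp (a' * \<bar>g x\<bar>)) \<le> ennreal (c m) * indicator (T m) x"
      using x m1 by (simp add: T_def ennreal_leI)
    also have "\<dots> \<le> (\<Sum>n. ennreal (c n) * indicator (T n) x)"
    proof -
      define F where "F n = ennreal (c n) * indicator (T n) x" for n
      have "(\<Sum>n\<in>{m}. F n) \<le> (\<Sum>n. F n)" by (rule sum_le_suminf[OF summableI]) auto
      moreover have "(\<Sum>n\<in>{m}. F n) = F m" by simp
      ultimately show ?thesis unfolding F_def by simp
    qed
    finally show ?thesis .
  qed
  have "(\<integral>\<^sup>+ x. ennreal (norm (exp (a' * \<bar>g x\<bar>))) \<partial>M) \<le> (\<integral>\<^sup>+ x. (\<Sum>n. ennreal (c n) * indicator (T n) x) \<partial>M)"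
    using pt by (intro nn_integral_mono) auto
  also have "\<dots> = (\<Sum>n. \<integral>\<^sup>+ x. ennreal (c n) * indicator (T n) x \<partial>M)"
    by (rule nn_integral_suminf) measurable
  also have "\<dots> = (\<Sum>n. ennreal (c n) * emeasure M (T n))"
    by (simp add: nn_integral_cmult_indicator)
  also have "\<dots> \<le> (\<Sum>n. ennreal (d n))"
  proof (intro suminf_le summableI)
    fix n
    have "emeasure M (T n) = ennreal (measure M (T n))" by (simp add: emeasure_eq_measure)
    also have "\<dots> \<le> ennreal (K * exp (- b * (real n)\<^sup>2))" using tail[of n] by (simp add: T_def ennreal_leI)
    finally have "ennreal (c n) * emeasure M (T n) \<le> ennreal (c n) * ennreal (K * exp (- b * (real n)\<^sup>2))"
      by (intro mult_left_mono) auto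
    also have "\<dots> = ennreal (d n)" by (simp add: d_def c_def ennreal_mult[symmetric] K)
    finally show "ennreal (c n) * emeasure M (T n) \<le> ennreal (d n)" .
  qed
  also have "\<dots> < \<infinity>" using ennreal_suminf_neq_top[OF sd d_nonneg] by (simp add: top.not_eq_extremum)
  finally have "integrable M (\<lambda>x. exp (a' * \<bar>g x\<bar>))"
    by (intro integrableI_bounded) auto
  then show ?thesis
  proof (rule Bochner_Integration.integrable_bound)
    show "(\<lambda>x. exp (a * \<bar>g x\<bar>)) \<in> borel_measurable M" by measurable
    show "AE x in M. norm (exp (a * \<bar>g x\<bar>)) \<le> norm (exp (a' * \<bar>g x\<bar>))"
      by (rule AE_I2) (simp add: a'_def mult_right_mono)
  qed
qed

lemma moment_pos:
  fixes M :: "real measure" and g :: "real \<Rightarrow> real"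
  assumes P: "prob_space M" and g[measurable]: "g \<in> borel_measurable M"
    and I: "\<And>a. integrable M (\<lambda>x. exp (a * \<bar>g x\<bar>))"
    and nz: "AE x in M. g x \<noteq> 0" and k: "even k"
  shows "(\<integral>x. g x ^ k * exp (y * g x) \<partial>M) > 0"
proof -
  interpret prob_space M by (rule P)
  have nn: "0 \<le> g x ^ k * exp (y * g x)" for x using k by (simp add: zero_le_even_power)
  have int: "integrable M (\<lambda>x. g x ^ k * exp (y * g x))" by (rule integrable_moment[OF g I])
  have ge: "(\<integral>x. g x ^ k * exp (y * g x) \<partial>M) \<ge> 0" using nn by (simp add: integral_nonneg)
  moreover have "(\<integral>x. g x ^ k * exp (y * g x) \<partial>M) \<noteq> 0"
  proof
    assume "(\<integral>x. g x ^ k * exp (y * g x) \<partial>M) = 0"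
    then have "AE x in M. g x ^ k * exp (y * g x) = 0"
      using integral_nonneg_eq_0_iff_AE[OF int] nn by auto
    with nz have "AE x in M. False" by eventually_elim auto
    then show False by simp
  qed
  ultimately show ?thesis by linarith
qed

lemma strict_mono_from_deriv:
  fixes f f' :: "real \<Rightarrow> real"
  assumes "\<And>x. (f has_real_derivative f' x) (at x)" "\<And>x. f' x > 0"
  shows "strict_mono f"
  unfolding strict_mono_def
  by (metis assms DERIV_pos_imp_increasing)

lemma strictly_convex_aux:
  fixes f f' :: "real \<Rightarrow> real"
  assumes d: "\<And>x. (f has_real_derivative f' x) (at x)" and m: "strict_mono f'"
    and xy: "x < y" and t: "0 < t" "t < 1"
  shows "f ((1 - t) * x + t * y) < (1 - t) * f x + t * f y"
proof -
  define z where "z = (1 - t) * x + t * y"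
  have zx: "z - x = t * (y - x)" and yz: "y - z = (1 - t) * (y - x)"
    by (simp_all add: z_def algebra_simps)
  have p1: "0 < t * (y - x)" using t xy by simp
  have p2: "0 < (1 - t) * (y - x)" using t xy by simp
  have "x < z" using p1 zx by linarith
  have "z < y" using p2 yz by linarith
  obtain a where a: "x < a" "a < z" "f z - f x = (z - x) * f' a"
    using MVT2[OF \<open>x < z\<close>, of f f'] d by blast
  obtain c where c: "z < c" "c < y" "f y - f z = (y - z) * f' c"
    using MVT2[OF \<open>z < y\<close>, of f f'] d by blast
  have "f' a < f' c" using m a c by (meson strict_monoD order.strict_trans)
  have "(1 - t) * f x + t * f y - f z = (1 - t) * (f x - f z) + t * (f y - f z)"
    by (simp add: algebra_simps)
  also have "\<dots> = (1 - t) * (- (t * (y - x) * f' a)) + t * ((1 - t) * (y - x) * f' c)"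
  proof -
    have A: "f x - f z = - (t * (y - x) * f' a)" using a(3)[unfolded zx] by linarith
    have B: "f y - f z = (1 - t) * (y - x) * f' c" using c(3)[unfolded yz] by linarith
    show ?thesis by (simp only: A B)
  qed
  also have "\<dots> = t * (1 - t) * (y - x) * (f' c - f' a)"
    by (simp add: algebra_simps)
  also have "\<dots> > 0" using t xy \<open>f' a < f' c\<close> by (intro mult_pos_pos) auto
  finally show ?thesis unfolding z_def by simp
qed

lemma strictly_convex_from_deriv:
  fixes f f' :: "real \<Rightarrow> real"
  assumes d: "\<And>x. (f has_real_derivative f' x) (at x)" and m: "strict_mono f'"
  shows "strictly_convex f"
  unfolding strictly_convex_def
proof (intro allI impI)
  fix x y t :: real assume xy: "x \<noteq> y" and t: "0 < t" "t < 1"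
  show "f ((1 - t) * x + t * y) < (1 - t) * f x + t * f y"
  proof (cases "x < y")
    case True then show ?thesis using strictly_convex_aux[OF d m True t] by simp
  next
    case False
    then have "y < x" using xy by simp
    from strictly_convex_aux[OF d m this, of "1 - t"] t show ?thesis by (simp add: algebra_simps)
  qed
qed


definition clampF :: "(real \<Rightarrow> real) \<Rightarrow> real \<Rightarrow> real" where
  "clampF G x = G (max 0 (min 1 x))"

lemma LS_facts:
  fixes G :: "real \<Rightarrow> real"
  assumes Gc: "continuous_on {0..1} G" and Gm: "mono_on {0..1} G" and G0: "G 0 = 0" and G1: "G 1 = 1"
  shows LS_real_dist: "real_distribution (LS_measure G)"
    and LS_Icc: "a \<le> b \<Longrightarrow> emeasure (LS_measure G) {a..b} = clampF G b - clampF G a"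
    and LS_point: "emeasure (LS_measure G) {x} = 0"
    and LS_cdf: "cdf (LS_measure G) = clampF G"
proof -
  let ?F = "clampF G"
  have mono: "?F x \<le> ?F y" if "x \<le> y" for x y
    unfolding clampF_def using that by (intro mono_onD[OF Gm]) auto
  have cont: "continuous_on UNIV ?F"
    unfolding clampF_def[abs_def]
    by (rule continuous_on_compose2[OF Gc]) (auto intro!: continuous_intros)
  have rc: "continuous (at_right a) ?F" for a
    using cont by (simp add: continuous_on_eq_continuous_within continuous_at_imp_continuous_at_within)
  have bot: "(?F \<longlongrightarrow> 0) at_bot"
    by (rule tendsto_eventually) (auto simp: clampF_def G0 eventually_at_bot_linorder intro!: exI[of _ 0])
  have top: "(?F \<longlongrightarrow> 1) at_top"
    by (rule tendsto_eventually) (auto simp: clampF_def G1 eventually_at_top_linorder intro!: exI[of _ 1])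
  have LS: "LS_measure G = interval_measure ?F"
    by (simp add: LS_measure_def clampF_def[abs_def])
  show "real_distribution (LS_measure G)"
    unfolding LS by (rule real_distribution_interval_measure[OF mono rc bot top])
  show "a \<le> b \<Longrightarrow> emeasure (LS_measure G) {a..b} = ?F b - ?F a"
    unfolding LS by (rule emeasure_interval_measure_Icc[OF _ mono cont])
  show "emeasure (LS_measure G) {x} = 0"
    using emeasure_interval_measure_Icc[OF order_refl mono cont, of x] unfolding LS by simp
  show "cdf (LS_measure G) = ?F"
    unfolding LS by (rule cdf_interval_measure[OF mono rc bot])
qed

lemma dual_props:
  assumes A1: "assumption1 w"
  shows "continuous_on {0..1} w" "mono_on {0..1} w" "w 0 = 0" "w 1 = 1"
    and "continuous_on {0..1} (dual_w w)" "mono_on {0..1} (dual_w w)" "dual_w w 0 = 0" "dual_w w 1 = 1"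
proof -
  show wc: "continuous_on {0..1} w" and w0: "w 0 = 0" and w1: "w 1 = 1"
    using A1 unfolding assumption1_def by auto
  have sm: "strict_mono_on {0..1} w" using A1 unfolding assumption1_def by auto
  show wm: "mono_on {0..1} w" using sm by (rule strict_mono_on_imp_mono_on)
  show "continuous_on {0..1} (dual_w w)"
    unfolding dual_w_def[abs_def]
    by (intro continuous_intros continuous_on_compose2[OF wc]) auto
  show "mono_on {0..1} (dual_w w)"
    unfolding dual_w_def by (rule mono_onI) (auto intro!: mono_onD[OF wm])
  show "dual_w w 0 = 0" "dual_w w 1 = 1" using w0 w1 by (auto simp: dual_w_def)
qed


lemma LS_measure_Icc:
  fixes G :: "real \<Rightarrow> real"
  assumes Gc: "continuous_on {0..1} G" and Gm: "mono_on {0..1} G" and G0: "G 0 = 0" and G1: "G 1 = 1"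
    and ab: "0 \<le> a" "a \<le> b" "b \<le> 1"
  shows "measure (LS_measure G) {a..b} = G b - G a"
proof -
  have "emeasure (LS_measure G) {a..b} = ennreal (G b - G a)"
    using LS_Icc[OF Gc Gm G0 G1 ab(2)] ab by (simp add: clampF_def)
  moreover have "G a \<le> G b" using ab by (intro mono_onD[OF Gm]) auto
  ultimately show ?thesis by (simp add: measure_def)
qed

lemma Q_meas:
  assumes S: "sets M = sets borel"
  shows "QQ \<in> borel_measurable (restrict_space M {0..1})"
proof -
  have "QQ \<in> borel_measurable (restrict_space borel {0<..<1})"
    by (rule borel_measurable_mono_on_fnc[OF Q_mono])
  then have "(\<lambda>x. if x \<in> {0<..<1} then QQ x else 0) \<in> borel_measurable borel"
    by (subst measurable_restrict_space_iff[symmetric]) auto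
  then have "(\<lambda>x. if x \<in> {0<..<1} then QQ x else 0) \<in> borel_measurable M"
    by (simp add: measurable_cong_sets[OF S refl])
  then have m: "(\<lambda>x. if x \<in> {0<..<1} then QQ x else 0) \<in> borel_measurable (restrict_space M {0..1})"
    by (rule measurable_restrict_space1)
  show ?thesis
  proof (rule measurable_discrete_difference[OF m, of "{0,1}"])
    show "\<And>x. x \<in> {0, 1} \<Longrightarrow> {x} \<in> sets (restrict_space M {0..1})"
      using S by (subst sets_restrict_space_iff) auto
    show "\<And>x. x \<in> space (restrict_space M {0..1}) \<Longrightarrow> x \<notin> {0, 1} \<Longrightarrow>
        (if x \<in> {0<..<1} then QQ x else 0) = QQ x"
      using S by (auto simp: space_restrict_space)
  qed auto
qed

context
  fixes w :: "real \<Rightarrow> real"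
  assumes A1: "assumption1 w"
begin

abbreviation "mu \<equiv> LS_measure (dual_w w)"
abbreviation "nu \<equiv> LS_measure w"
abbreviation "M1 \<equiv> restrict_space mu {0..1}"

lemmas dp = dual_props[OF A1]

lemma mu_rd: "real_distribution mu" by (rule LS_real_dist[OF dp(5-8)])
lemma nu_rd: "real_distribution nu" by (rule LS_real_dist[OF dp(1-4)])

lemma sets_mu[simp]: "sets mu = sets borel" by (simp add: LS_measure_def)
lemma space_M1[simp]: "space M1 = {0..1}" by (simp add: space_restrict_space)

lemma M1_prob: "prob_space M1"
proof (rule prob_space_restrict_space)
  show "{0..1} \<in> sets mu" by simp
  show "emeasure mu {0..1} = 1"
    using LS_Icc[OF dp(5-8), of 0 1] dp(7,8) by (simp add: clampF_def)
qed

lemma M1_point: "emeasure M1 {x} = 0"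
proof (cases "x \<in> {0..1}")
  case True
  then show ?thesis using LS_point[OF dp(5-8)] by (subst emeasure_restrict_space) auto
next
  case False
  then have "{x} \<notin> sets M1" by (subst sets_restrict_space_iff) auto
  then show ?thesis by (simp add: emeasure_notin_sets)
qed

lemma nu_point: "emeasure nu {x} = 0"
  by (rule LS_point[OF dp(1-4)])

lemma Q_meas_M1: "QQ \<in> borel_measurable M1"
  by (rule Q_meas) simp

lemma M1_tail: "\<exists>K b. 0 < b \<and> (\<forall>n::nat. measure M1 {x\<in>space M1. real n \<le> \<bar>- QQ x\<bar>} \<le> K * exp (- b * (real n)\<^sup>2))"
proof -
  obtain C \<beta> where C: "C > 0" and be: "0 < \<beta>" "\<beta> \<le> 1"
    and wb: "\<And>s. s\<in>{0..1} \<Longrightarrow> w s \<le> C * s powr \<beta> \<and> 1 - w (1 - s) \<le> C * s powr \<beta>"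
    using weight_bound[OF A1] by blast
  interpret P: prob_space M1 by (rule M1_prob)
  show ?thesis
  proof (intro exI conjI allI)
    show "0 < \<beta> / 2" using be by simp
    fix n :: nat
    let ?S = "{x\<in>space M1. real n \<le> \<bar>- QQ x\<bar>}"
    show "measure M1 ?S \<le> (2 * C + 1) * exp (- (\<beta> / 2) * (real n)\<^sup>2)"
    proof (cases "n = 0")
      case True
      have "measure M1 ?S \<le> 1" by (rule P.prob_le_1)
      moreover have "(2 * C + 1) * exp (- (\<beta> / 2) * (real n)\<^sup>2) = 2 * C + 1" using True by simp
      ultimately show ?thesis using C by linarith
    next
      case False
      then have n1: "1 \<le> real n" by simp
      define s where "s = std_normal_cdf (- real n)"
      have s01: "0 \<le> s" "s \<le> 1" using Phi_pos[of "- real n"] Phi_less1[of "- real n"] by (auto simp: s_def)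
      have s2: "std_normal_cdf (real n) = 1 - s" using Phi_sym[of "real n"] by (simp add: s_def)
      have sub: "?S \<subseteq> {0} \<union> {1} \<union> {0..s} \<union> {1 - s..1}"
      proof
        fix x assume x: "x \<in> ?S"
        show "x \<in> {0} \<union> {1} \<union> {0..s} \<union> {1 - s..1}"
        proof (cases "x = 0 \<or> x = 1")
          case True then show ?thesis by auto
        next
          case False
          then have x01: "0 < x" "x < 1" using x by auto
          have "real n \<le> QQ x \<or> QQ x \<le> - real n" using x by auto
          then have "std_normal_cdf (real n) \<le> x \<or> x \<le> std_normal_cdf (- real n)"
            using Q_ge_iff[OF x01] Q_le_iff[OF x01] by auto
          then show ?thesis using x01 s2 by (auto simp: s_def)
        qed
      qed
      have mp: "measure M1 {x} = 0" for x using M1_point[of x] by (simp add: measure_def)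
      have "measure M1 ?S \<le> measure M1 ({0} \<union> {1} \<union> {0..s} \<union> {1 - s..1})"
        using sub s01 by (intro P.finite_measure_mono) (auto simp: sets_restrict_space_iff)
      also have "\<dots> \<le> measure M1 ({0} \<union> {1} \<union> {0..s}) + measure M1 {1 - s..1}"
        using s01 by (intro measure_subadditive) (auto simp: sets_restrict_space_iff P.emeasure_finite)
      also have "\<dots> \<le> measure M1 ({0} \<union> {1}) + measure M1 {0..s} + measure M1 {1 - s..1}"
        using s01 by (intro add_right_mono measure_subadditive) (auto simp: sets_restrict_space_iff P.emeasure_finite)
      also have "\<dots> \<le> measure M1 {0} + measure M1 {1} + measure M1 {0..s} + measure M1 {1 - s..1}"
        by (intro add_right_mono measure_subadditive) (auto simp: sets_restrict_space_iff P.emeasure_finite)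
      also have "\<dots> = measure mu {0..s} + measure mu {1 - s..1}"
        using s01 by (simp add: mp measure_restrict_space)
      also have "\<dots> = (dual_w w s - dual_w w 0) + (dual_w w 1 - dual_w w (1 - s))"
        using s01 by (simp add: LS_measure_Icc[OF dp(5-8)])
      also have "\<dots> = (1 - w (1 - s)) + w s"
        using dp(3,4) by (simp add: dual_w_def)
      also have "\<dots> \<le> 2 * C * s powr \<beta>" using wb[of s] s01 by auto
      also have "\<dots> \<le> 2 * C * exp (- (real n)\<^sup>2 / 2) powr \<beta>"
        using Phi_tail[OF n1] s01 C be by (intro mult_left_mono powr_mono2) (auto simp: s_def)
      also have "\<dots> = 2 * C * exp (- (\<beta> / 2) * (real n)\<^sup>2)"
        by (simp add: powr_def)
      also have "\<dots> \<le> (2 * C + 1) * exp (- (\<beta> / 2) * (real n)\<^sup>2)"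
        by (intro mult_right_mono) auto
      finally show ?thesis .
    qed
  qed
qed

lemma M1_exp_int: "integrable M1 (\<lambda>x. exp (a * \<bar>- QQ x\<bar>))"
proof -
  obtain K b where b: "0 < b" and t: "\<And>n::nat. measure M1 {x\<in>space M1. real n \<le> \<bar>- QQ x\<bar>} \<le> K * exp (- b * (real n)\<^sup>2)"
    using M1_tail by blast
  interpret P: prob_space M1 by (rule M1_prob)
  have m: "(\<lambda>x. - QQ x) \<in> borel_measurable M1" using Q_meas_M1 by measurable
  show ?thesis
    by (rule exp_abs_integrable[OF P.finite_measure_axioms m b t])
qed

end


context
  fixes w :: "real \<Rightarrow> real"
  assumes A1: "assumption1 w"
begin

lemma sets_nu[simp, measurable_cong]: "sets (LS_measure w) = sets borel" by (simp add: LS_measure_def)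

lemma mu_reflect: "LS_measure (dual_w w) = distr (LS_measure w) borel (\<lambda>q. 1 - q)"
proof -
  let ?nu = "LS_measure w"
  interpret N: real_distribution ?nu by (rule nu_rd[OF A1])
  have rv: "(\<lambda>q. 1 - q) \<in> borel_measurable ?nu" by measurable
  have rd: "real_distribution (distr ?nu borel (\<lambda>q. 1 - q))"
    by (rule N.real_distribution_distr[OF rv])
  have "cdf (distr ?nu borel (\<lambda>q. 1 - q)) x = clampF (dual_w w) x" for x
  proof -
    have "cdf (distr ?nu borel (\<lambda>q. 1 - q)) x = measure ?nu ((\<lambda>q. 1 - q) -` {..x} \<inter> space ?nu)"
      unfolding cdf_def by (rule measure_distr[OF rv]) simp
    also have "(\<lambda>q. 1 - q) -` {..x} \<inter> space ?nu = UNIV - {..<1 - x}" by auto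
    also have "measure ?nu (UNIV - {..<1 - x}) = 1 - measure ?nu {..<1 - x}"
      using N.prob_compl[of "{..<1 - x}"] by simp
    also have "measure ?nu {..<1 - x} = measure ?nu {..1 - x}"
    proof -
      have "measure ?nu ({..<1 - x} \<union> {1 - x}) = measure ?nu {..<1 - x} + measure ?nu {1 - x}"
        by (rule N.finite_measure_Union) auto
      moreover have "measure ?nu {1 - x} = 0" using nu_point[OF A1] by (simp add: measure_def)
      moreover have "{..<1 - x} \<union> {1 - x} = {..1 - x}" by auto
      ultimately show ?thesis by simp
    qed
    also have "\<dots> = clampF w (1 - x)"
      using LS_cdf[OF dual_props(1-4)[OF A1]] by (metis cdf_def)
    also have "1 - clampF w (1 - x) = clampF (dual_w w) x"
    proof -
      have "1 - max 0 (min 1 x) = max 0 (min 1 (1 - x))" by (simp add: max_def min_def)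
      then show ?thesis by (simp add: clampF_def dual_w_def)
    qed
    finally show ?thesis .
  qed
  then have "cdf (LS_measure (dual_w w)) = cdf (distr ?nu borel (\<lambda>q. 1 - q))"
    using LS_cdf[OF dual_props(5-8)[OF A1]] by auto
  then show ?thesis by (rule cdf_unique[OF mu_rd[OF A1] rd])
qed

lemma transfer:
  fixes f :: "real \<Rightarrow> real"
  assumes f[measurable]: "f \<in> borel_measurable borel"
  shows "(LINT p:{0..1}|LS_measure (dual_w w). f (QQ p)) = (LINT q:{0..1}|LS_measure w. f (- QQ q))"
proof -
  let ?nu = "LS_measure w"
  define Qz where "Qz x = (if x \<in> {0<..<1} then QQ x else 0)" for x
  have "QQ \<in> borel_measurable (restrict_space borel {0<..<1})"
    by (rule borel_measurable_mono_on_fnc[OF Q_mono])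
  then have Qz[measurable]: "Qz \<in> borel_measurable borel"
    unfolding Qz_def[abs_def] by (subst measurable_restrict_space_iff[symmetric]) auto
  have mF: "(\<lambda>p. indicator {0..1} p *\<^sub>R f (QQ p)) \<in> borel_measurable borel"
  proof (rule measurable_discrete_difference[of "\<lambda>p. indicator {0..1} p *\<^sub>R f (Qz p)" _ _ "{0,1}"])
    show "(\<lambda>p. indicator {0..1} p *\<^sub>R f (Qz p)) \<in> borel_measurable borel" by measurable
    show "\<And>x. x \<in> space borel \<Longrightarrow> x \<notin> {0, 1} \<Longrightarrow>
        indicator {0..1} x *\<^sub>R f (Qz x) = indicator {0..1} x *\<^sub>R f (QQ x)"
      by (auto simp: Qz_def indicator_def)
  qed auto
  have "(LINT p:{0..1}|LS_measure (dual_w w). f (QQ p))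
      = (\<integral>p. indicator {0..1} p *\<^sub>R f (QQ p) \<partial>distr ?nu borel (\<lambda>q. 1 - q))"
    unfolding set_lebesgue_integral_def mu_reflect ..
  also have "\<dots> = (\<integral>q. indicator {0..1} (1 - q) *\<^sub>R f (QQ (1 - q)) \<partial>?nu)"
    by (rule integral_distr[OF _ mF]) measurable
  also have "\<dots> = (\<integral>q. indicator {0..1} q *\<^sub>R f (- QQ q) \<partial>?nu)"
  proof (rule integral_discrete_difference[of "{0,1}"])
    show "\<And>x. x \<in> {0, 1} \<Longrightarrow> emeasure ?nu {x} = 0" using nu_point[OF A1] by auto
    show "\<And>x. x \<in> space ?nu \<Longrightarrow> x \<notin> {0, 1} \<Longrightarrow>
        indicator {0..1} (1 - x) *\<^sub>R f (QQ (1 - x)) = indicator {0..1} x *\<^sub>R f (- QQ x)"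
    proof -
      fix x :: real assume "x \<notin> {0, 1}"
      then show "indicator {0..1} (1 - x) *\<^sub>R f (QQ (1 - x)) = indicator {0..1} x *\<^sub>R f (- QQ x)"
        by (cases "0 < x \<and> x < 1") (auto simp: indicator_def Q_reflect)
    qed
  qed auto
  also have "\<dots> = (LINT q:{0..1}|?nu. f (- QQ q))"
    unfolding set_lebesgue_integral_def ..
  finally show ?thesis .
qed

end


theorem lemmaA1:
  fixes w h :: "real \<Rightarrow> real"
  assumes A1: "assumption1 w"
    and h_def: "\<And>x. h x = (LINT p:{0..1}|LS_measure (dual_w w). exp (- x * std_normal_quantile p))"
  shows "h 0 = 1
    \<and> (\<forall>x. (\<integral>\<^sup>+ p\<in>{0..1}. ennreal (exp (- x * std_normal_quantile p)) \<partial>LS_measure (dual_w w)) < \<infinity>)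
    \<and> (\<forall>k x. ((deriv ^^ k) h has_real_derivative (deriv ^^ Suc k) h x) (at x))
    \<and> (\<forall>k x. (deriv ^^ k) h x
          = (LINT p:{0..1}|LS_measure (dual_w w). (- std_normal_quantile p) ^ k * exp (- x * std_normal_quantile p))
        \<and> (deriv ^^ k) h x
          = (LINT p:{0..1}|LS_measure w. (std_normal_quantile p) ^ k * exp (x * std_normal_quantile p)))
    \<and> (\<forall>k. even k \<longrightarrow> (\<forall>x. (deriv ^^ k) h x > 0) \<and> strictly_convex ((deriv ^^ k) h))
    \<and> (\<forall>k. odd k \<longrightarrow> strict_mono ((deriv ^^ k) h))"
proof -
  let ?mu = "LS_measure (dual_w w)"
  let ?M1 = "restrict_space ?mu {0..1}"
  define HH where "HH k x = (\<integral>p. (- QQ p) ^ k * exp (x * (- QQ p)) \<partial>?M1)" for k x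
  interpret P: prob_space ?M1 by (rule M1_prob[OF A1])
  have gm: "(\<lambda>p. - QQ p) \<in> borel_measurable ?M1" using Q_meas_M1[OF A1] by measurable
  have I: "\<And>a. integrable ?M1 (\<lambda>p. exp (a * \<bar>- QQ p\<bar>))" by (rule M1_exp_int[OF A1])
  have HHd: "(HH k has_real_derivative HH (Suc k) x) (at x)" for k x
    unfolding HH_def[abs_def] by (rule moment_deriv[OF gm I])
  have conv: "(LINT p:{0..1}|?mu. F p) = (\<integral>p. F p \<partial>?M1)" for F :: "real \<Rightarrow> real"
    by (subst integral_restrict_space) (auto simp: set_lebesgue_integral_def LS_measure_def)
  have HH_eq: "HH k x = (LINT p:{0..1}|?mu. (- QQ p) ^ k * exp (- x * QQ p))" for k x
    unfolding conv HH_def by simp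
  have h0: "h = HH 0" using h_def HH_eq[of 0] by (intro ext) simp
  have dk: "(deriv ^^ k) h = HH k" for k
  proof (induction k)
    case 0 then show ?case using h0 by simp
  next
    case (Suc k)
    show ?case using HHd[of k] DERIV_imp_deriv Suc by (auto intro!: ext)
  qed
  have nz: "AE p in ?M1. - QQ p \<noteq> 0"
  proof -
    have "AE p in ?M1. p \<notin> {0, 1/2, 1}"
      by (rule AE_discrete_difference) (auto simp: M1_point[OF A1] sets_restrict_space_iff sets_mu[OF A1])
    then show ?thesis
    proof (rule AE_mp[OF _ AE_I2])
      fix p assume "p \<in> space ?M1"
      then show "p \<notin> {0, 1/2, 1} \<longrightarrow> - QQ p \<noteq> 0"
        using Q_zero[of p] by (auto simp: space_restrict_space)
    qed
  qed
  have pos: "HH k x > 0" if "even k" for k x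
    unfolding HH_def by (rule moment_pos[OF M1_prob[OF A1] gm I nz that])
  show ?thesis
  proof (intro conjI allI impI)
    show "h 0 = 1"
    proof -
      have "h 0 = (\<integral>p. 1 \<partial>?M1)" using h0 by (simp add: HH_def)
      also have "\<dots> = 1" using P.prob_space by simp
      finally show ?thesis .
    qed
  next
    fix x
    have int: "integrable ?M1 (\<lambda>p. exp (- x * QQ p))" using integrable_moment[OF gm I, of 0 x] by simp
    have "(\<integral>\<^sup>+ p. ennreal (norm (exp (- x * QQ p))) \<partial>?M1) < \<infinity>" using integrableD(2)[OF int] by (simp add: top.not_eq_extremum)
    then show "(\<integral>\<^sup>+ p\<in>{0..1}. ennreal (exp (- x * QQ p)) \<partial>?mu) < \<infinity>"
      by (subst (asm) nn_integral_restrict_space) (auto simp: sets_mu[OF A1])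
  next
    fix k x
    show "((deriv ^^ k) h has_real_derivative (deriv ^^ Suc k) h x) (at x)"
      unfolding dk by (rule HHd)
  next
    fix k x
    show "(deriv ^^ k) h x = (LINT p:{0..1}|?mu. (- QQ p) ^ k * exp (- x * QQ p))"
      unfolding dk by (rule HH_eq)
  next
    fix k x
    have "(deriv ^^ k) h x = (LINT p:{0..1}|?mu. (\<lambda>v. (- v) ^ k * exp (- x * v)) (QQ p))"
      unfolding dk HH_eq by simp
    also have "\<dots> = (LINT q:{0..1}|LS_measure w. (\<lambda>v. (- v) ^ k * exp (- x * v)) (- QQ q))"
      by (rule transfer[OF A1]) measurable
    also have "\<dots> = (LINT q:{0..1}|LS_measure w. (QQ q) ^ k * exp (x * QQ q))"
      by simp
    finally show "(deriv ^^ k) h x = (LINT q:{0..1}|LS_measure w. (QQ q) ^ k * exp (x * QQ q))" .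
  next
    fix k :: nat and x :: real assume "even k"
    then show "(deriv ^^ k) h x > 0" unfolding dk by (rule pos)
  next
    fix k :: nat assume k: "even k"
    have sm: "strict_mono (HH (Suc k))"
      by (rule strict_mono_from_deriv[OF HHd]) (use k pos in auto)
    show "strictly_convex ((deriv ^^ k) h)"
      unfolding dk by (rule strictly_convex_from_deriv[OF HHd sm])
  next
    fix k :: nat assume k: "odd k"
    show "strict_mono ((deriv ^^ k) h)"
      unfolding dk by (rule strict_mono_from_deriv[OF HHd]) (use k pos in auto)
  qed
qed


end
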